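(* Let $\{X_t\}$ satisfy Assumption CEV, and let $\alpha>0$ and $\kappa_j$ be the tail index of $X_0$ and the conditional scaling exponents (so $\mathbb P(X_0>x)$ is regularly varying with index $-\alpha$ and $b_j$ is regularly varying with index $\kappa_j$). Fix $h\ge1$ and assume $$\int_{[0,\infty]^{h+1}}\mathbf 1\{y_0y_h>1\}\,\nu_h(\mathrm d\boldsymbol y)<\infty$$ (integral over the points of $(0,\infty]\times[0,\infty]^h$ with $y_0y_h>1$), and that there exists $\delta>0$ such that $$\lim_{\epsilon\to0}\limsup_{x\to\infty}\frac{\mathbb E\Big[\Big|\frac{X_0}{x}\mathbf 1\{X_0\le\epsilon x\}\frac{X_h}{b_h(x)}\Big|^\delta\Big]}{\mathbb P(X_0>x)}=0.$$ Then for every $u>0$, $$\lim_{x\to\infty}\frac{\mathbb P(X_0X_h>x\,b_h(x)\,u)}{\mathbb P(X_0>x)}=u^{-\alpha/(1+\kappa_h)}\int_{[0,\infty]^{h+1}}\mathbf 1\{y_0y_h>1\}\,\nu_h(\mathrm d\boldsymbol y).$$ In particular the right tail index of $X_0X_h$ is $\alpha/(1+\kappa_h)$.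
   Context: Assumption CEV: $\{X_t\}_{t\in\mathbb Z}$ is a real-valued time series (not necessarily stationary). There exist positive scaling functions $b_j$, $j\ge1$, and, for each $h\ge1$, a nonzero Radon measure $\nu_h$ on $(0,\infty]\times[-\infty,\infty]^h$ such that $$\frac{1}{\mathbb P(X_0>x)}\,\mathbb P\Big(\Big(\frac{X_0}{x},\frac{X_1}{b_1(x)},\dots,\frac{X_h}{b_h(x)}\Big)\in\cdot\Big)\to\nu_h$$ vaguely on $(0,\infty]\times[-\infty,\infty]^h$ as $x\to\infty$ (relatively compact sets of this space are those whose points have first coordinate bounded below by some $\epsilon>0$), and for every $y_0>0$: (a) the measure $\nu_h([y_0,\infty]\times\cdot)$ on $\mathbb R^h$ is not concentrated on a line through infinity; (b) the measure $\nu_h([y_0,\infty]\times\cdot)$ on $\mathbb R^h$ is not concentrated on a hyperplane; (c) the measure $\nu_h(\cdot\times\mathbb R^h)$ on $(0,\infty]$ is not concentrated at $\{\infty\}$. Under this assumption $\mathbb P(X_0>x)$ is regularly varying with index $-\alpha$ for some $\alpha>0$, each $b_j$ is regularly varying with some index $\kappa_j\in\mathbb R$ (the lag-$j$ conditional scaling exponent), and $\nu_h((ty_0,\infty]\times\prod_i[-\infty,t^{\kappa_i}y_i])=t^{-\alpha}\nu_h((y_0,\infty]\times\prod_i[-\infty,y_i])$. *)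

theory Defs
  imports "HOL-Probability.Probability"
begin

definition regularly_varying :: "(real \<Rightarrow> real) \<Rightarrow> real \<Rightarrow> bool" where
  "regularly_varying F \<rho> \<longleftrightarrow>
     eventually (\<lambda>x. F x > 0) at_top \<and>
     (\<forall>t>0. ((\<lambda>x. F (t * x) / F x) \<longlongrightarrow> t powr \<rho>) at_top)"

definition tailprob :: "'a measure \<Rightarrow> (int \<Rightarrow> 'a \<Rightarrow> real) \<Rightarrow> real \<Rightarrow> real" where
  "tailprob M X x = measure M {\<omega> \<in> space M. X 0 \<omega> > x}"

definition cev_vec ::
  "(int \<Rightarrow> 'a \<Rightarrow> real) \<Rightarrow> (nat \<Rightarrow> real \<Rightarrow> real) \<Rightarrow> nat \<Rightarrow> real \<Rightarrow> 'a \<Rightarrow> (nat \<Rightarrow> ereal)" where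
  "cev_vec X b h x \<omega> =
     (\<lambda>i\<in>{0..h}. if i = 0 then ereal (X 0 \<omega> / x) else ereal (X (int i) \<omega> / b i x))"

text \<open>Test functions for vague convergence on (0,inf] x [-inf,inf]^h: continuous
  real functions vanishing on {y_0 < eps} for some eps > 0 (compact support).\<close>
definition cev_testfun :: "nat \<Rightarrow> ((nat \<Rightarrow> ereal) \<Rightarrow> real) \<Rightarrow> bool" where
  "cev_testfun h f \<longleftrightarrow>
     continuous_map (product_topology (\<lambda>_. euclidean) {0..h}) euclideanreal f \<and>
     (\<exists>\<epsilon>>0. \<forall>y. y 0 < ereal \<epsilon> \<longrightarrow> f y = 0)"

text \<open>nu is a nonzero Radon measure on (0,inf] x [-inf,inf]^h.\<close>
definition cev_radon :: "nat \<Rightarrow> (nat \<Rightarrow> ereal) measure \<Rightarrow> bool" where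
  "cev_radon h \<nu> \<longleftrightarrow>
     sets \<nu> = sets (PiM {0..h} (\<lambda>_. borel :: ereal measure)) \<and>
     emeasure \<nu> {y \<in> space \<nu>. y 0 \<le> 0} = 0 \<and>
     (\<forall>\<epsilon>>0. emeasure \<nu> {y \<in> space \<nu>. ereal \<epsilon> \<le> y 0} < \<infinity>) \<and>
     emeasure \<nu> (space \<nu>) \<noteq> 0"

definition cev_vague :: "'a measure \<Rightarrow> (int \<Rightarrow> 'a \<Rightarrow> real) \<Rightarrow> (nat \<Rightarrow> real \<Rightarrow> real)
    \<Rightarrow> nat \<Rightarrow> (nat \<Rightarrow> ereal) measure \<Rightarrow> bool" where
  "cev_vague M X b h \<nu> \<longleftrightarrow>
     (\<forall>f. cev_testfun h f \<longrightarrow>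
        ((\<lambda>x. (\<integral>\<omega>. f (cev_vec X b h x \<omega>) \<partial>M) / tailprob M X x)
           \<longlongrightarrow> (\<integral>y. f y \<partial>\<nu>)) at_top)"

text \<open>Nondegeneracy conditions (a), (b), (c) of Assumption CEV.
  (a): nu([y0,inf] x .) restricted to R^h is not concentrated on the points at infinity,
  i.e. gives positive mass to R^h. (b): it is not concentrated on an affine hyperplane
  of R^h. (c): nu(. x R^h) on (0,inf] is not concentrated at {inf}.\<close>
definition cev_nondeg :: "nat \<Rightarrow> (nat \<Rightarrow> ereal) measure \<Rightarrow> bool" where
  "cev_nondeg h \<nu> \<longleftrightarrow>
     (\<forall>y0>0. emeasure \<nu> {y \<in> space \<nu>. ereal y0 \<le> y 0 \<and> (\<forall>i\<in>{1..h}. \<bar>y i\<bar> \<noteq> \<infinity>)} \<noteq> 0) \<and>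
     (\<forall>y0>0. \<forall>(a :: nat \<Rightarrow> real) (c :: real). (\<exists>i\<in>{1..h}. a i \<noteq> 0) \<longrightarrow>
        emeasure \<nu> {y \<in> space \<nu>. ereal y0 \<le> y 0 \<and> (\<forall>i\<in>{1..h}. \<bar>y i\<bar> \<noteq> \<infinity>) \<and>
            (\<Sum>i=1..h. a i * real_of_ereal (y i)) \<noteq> c} \<noteq> 0) \<and>
     emeasure \<nu> {y \<in> space \<nu>. 0 < y 0 \<and> y 0 < \<infinity> \<and> (\<forall>i\<in>{1..h}. \<bar>y i\<bar> \<noteq> \<infinity>)} \<noteq> 0"

definition CEV :: "'a measure \<Rightarrow> (int \<Rightarrow> 'a \<Rightarrow> real) \<Rightarrow> (nat \<Rightarrow> real \<Rightarrow> real)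
    \<Rightarrow> (nat \<Rightarrow> (nat \<Rightarrow> ereal) measure) \<Rightarrow> bool" where
  "CEV M X b \<nu> \<longleftrightarrow>
     (\<forall>j\<ge>1. \<forall>x>0. b j x > 0) \<and>
     (\<forall>h\<ge>1. cev_radon h (\<nu> h) \<and> cev_vague M X b h (\<nu> h) \<and> cev_nondeg h (\<nu> h))"

definition prod_exceed_set :: "nat \<Rightarrow> (nat \<Rightarrow> ereal) measure \<Rightarrow> (nat \<Rightarrow> ereal) set" where
  "prod_exceed_set h \<nu> = {y \<in> space \<nu>. 0 < y 0 \<and> 0 \<le> y h \<and> 1 < y 0 * y h}"

end

theory Submission
  imports Defs
begin


definition cl :: "real \<Rightarrow> real \<Rightarrow> ereal \<Rightarrow> real" where
  "cl a b z = real_of_ereal (max (ereal a) (min (ereal b) z))"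

lemma cl_cont:
  assumes "a \<le> b"
  shows "continuous_map euclidean euclideanreal (cl a b)"
proof -
  have "continuous_on UNIV (\<lambda>z::ereal. max (ereal a) (min (ereal b) z))"
    by (intro continuous_intros)
  moreover have "continuous_on (range (\<lambda>z::ereal. max (ereal a) (min (ereal b) z))) real_of_ereal"
  proof (rule continuous_at_imp_continuous_on, safe)
    fix z :: ereal
    have "\<bar>max (ereal a) (min (ereal b) z)\<bar> \<noteq> \<infinity>"
      using assms by (cases z) (auto simp: max_def min_def)
    then show "isCont real_of_ereal (max (ereal a) (min (ereal b) z))"
      by (rule continuous_at_of_ereal)
  qed
  ultimately have "continuous_on UNIV (real_of_ereal \<circ> (\<lambda>z::ereal. max (ereal a) (min (ereal b) z)))"
    by (rule continuous_on_compose)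
  then show ?thesis by (simp add: cl_def o_def)
qed

lemma cl_ereal: "a \<le> b \<Longrightarrow> cl a b (ereal r) = max a (min b r)"
  by (simp add: cl_def max_def min_def)

lemma cl_bounds: "a \<le> b \<Longrightarrow> a \<le> cl a b z \<and> cl a b z \<le> b"
  by (cases z) (auto simp: cl_def max_def min_def)

lemma cl_pinf: "a \<le> b \<Longrightarrow> cl a b \<infinity> = b"
  by (simp add: cl_def max_def min_def)

lemma cl_le: "a \<le> b \<Longrightarrow> ereal a \<le> z \<Longrightarrow> ereal (cl a b z) \<le> z"
  by (cases z) (auto simp: cl_def max_def min_def)

lemma cl_ge: "a \<le> b \<Longrightarrow> ereal a \<le> z \<Longrightarrow> z \<le> ereal b \<Longrightarrow> cl a b z = real_of_ereal z"
  by (cases z) (auto simp: cl_def max_def min_def)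

lemma cl_meas[measurable]: "cl a b \<in> borel_measurable borel"
  unfolding cl_def by measurable




definition phi :: "real \<Rightarrow> ereal \<Rightarrow> real" where
  "phi a z = (cl (a/2) a z - a/2) * (2/a)"

definition psi :: "real \<Rightarrow> real \<Rightarrow> real \<Rightarrow> real \<Rightarrow> ereal \<Rightarrow> ereal \<Rightarrow> real" where
  "psi K C lo hi y0 yh = (max lo (min hi (cl 0 K y0 * cl 0 C yh)) - lo) * inverse (hi - lo)"

definition Tf :: "real \<Rightarrow> real \<Rightarrow> real \<Rightarrow> real \<Rightarrow> real \<Rightarrow> ereal \<Rightarrow> ereal \<Rightarrow> real" where
  "Tf e K C lo hi y0 yh = phi e y0 * psi K C lo hi y0 yh"

lemma cont_proj_cl:
  assumes "i \<in> I" "a \<le> b"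
  shows "continuous_map (product_topology (\<lambda>_. euclidean) I) euclideanreal (\<lambda>y. cl a b (y i))"
  using continuous_map_compose[OF continuous_map_product_projection[OF assms(1)] cl_cont[OF assms(2)]]
  by (simp add: o_def)

lemma phi_cont:
  assumes "i \<in> I" "a > 0"
  shows "continuous_map (product_topology (\<lambda>_. euclidean) I) euclideanreal (\<lambda>y. phi a (y i))"
  unfolding phi_def using assms
  by (intro continuous_intros cont_proj_cl) auto

lemma Tf_cont:
  assumes "i \<in> I" "j \<in> I" "e > 0" "K \<ge> 0" "C \<ge> 0"
  shows "continuous_map (product_topology (\<lambda>_. euclidean) I) euclideanreal (\<lambda>y. Tf e K C lo hi (y i) (y j))"
  unfolding Tf_def psi_def using assms
  by (intro continuous_intros cont_proj_cl phi_cont) auto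

lemma phi_bounds: "a > 0 \<Longrightarrow> 0 \<le> phi a z \<and> phi a z \<le> 1"
  using cl_bounds[of "a/2" a z] by (auto simp: phi_def field_simps)

lemma phi_zero: "a > 0 \<Longrightarrow> z < ereal (a/2) \<Longrightarrow> phi a z = 0"
  by (cases z) (auto simp: phi_def cl_def max_def min_def)

lemma phi_one: "a > 0 \<Longrightarrow> ereal a \<le> z \<Longrightarrow> phi a z = 1"
  by (cases z) (auto simp: phi_def cl_def max_def min_def)

lemma phi_pos: "a > 0 \<Longrightarrow> phi a z > 0 \<Longrightarrow> z > ereal (a/2)"
  by (cases z) (auto simp: phi_def cl_def max_def min_def zero_less_divide_iff split: if_splits)

lemma psi_bounds: "lo < hi \<Longrightarrow> 0 \<le> psi K C lo hi y0 yh \<and> psi K C lo hi y0 yh \<le> 1"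
  by (auto simp: psi_def field_simps max_def min_def)

lemma Tf_bounds: "e > 0 \<Longrightarrow> lo < hi \<Longrightarrow> 0 \<le> Tf e K C lo hi y0 yh \<and> Tf e K C lo hi y0 yh \<le> 1"
  using phi_bounds[of e y0] psi_bounds[of lo hi K C y0 yh]
  by (auto simp: Tf_def intro: mult_le_one)

lemma Tf_pos:
  assumes "e > 0" "0 \<le> lo" "lo < hi" "K \<ge> 0" "C \<ge> 0" "Tf e K C lo hi y0 yh > 0"
  shows "y0 > ereal (e/2) \<and> 0 < yh \<and> ereal lo < y0 * yh"
proof -
  have ph: "phi e y0 > 0" and ps: "psi K C lo hi y0 yh > 0"
    using assms phi_bounds[of e y0] psi_bounds[of lo hi K C y0 yh]
    by (auto simp: Tf_def zero_less_mult_iff)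
  have y0: "y0 > ereal (e/2)" using phi_pos[OF assms(1) ph] .
  have prod: "cl 0 K y0 * cl 0 C yh > lo"
    using ps assms by (auto simp: psi_def max_def min_def zero_less_mult_iff split: if_splits)
  have a0: "0 \<le> cl 0 K y0" "0 \<le> cl 0 C yh" using cl_bounds assms by auto
  have c0: "cl 0 C yh > 0" using prod a0 assms
    by (metis le_less_trans linorder_not_le mult_zero_right order_antisym)
  have yh: "yh > 0"
  proof (rule ccontr)
    assume "\<not> yh > 0"
    then have "yh \<le> 0" by simp
    then have "cl 0 C yh = 0" using assms by (cases yh) (auto simp: cl_def max_def min_def)
    then show False using c0 by simp
  qed
  have y0pos: "y0 \<ge> 0" using y0 assms
    by (metis ereal_less_eq(5) le_less_trans less_imp_le linorder_not_le divide_pos_pos zero_less_numeral)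
  have l1: "ereal (cl 0 K y0) \<le> y0" using cl_le[of 0 K y0] assms y0pos by (simp add: zero_ereal_def)
  have l2: "ereal (cl 0 C yh) \<le> yh" using cl_le[of 0 C yh] assms yh by (simp add: zero_ereal_def)
  have "ereal lo < ereal (cl 0 K y0) * ereal (cl 0 C yh)" using prod by simp
  also have "\<dots> \<le> y0 * yh"
    by (rule ereal_mult_mono) (use l1 l2 a0 y0pos in auto)
  finally show ?thesis using y0 yh by simp
qed

lemma Tf_one:
  assumes "e > 0" "lo < hi" "ereal e \<le> y0" "y0 \<le> ereal K" "0 \<le> yh" "ereal hi < y0 * yh"
    "C * e \<ge> hi" "C \<ge> 0"
  shows "Tf e K C lo hi y0 yh = 1"
proof -
  have ph: "phi e y0 = 1" using phi_one assms by auto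
  obtain r where r: "y0 = ereal r" using assms by (cases y0) auto
  have rK: "e \<le> r" "r \<le> K" using assms r by auto
  have C0: "C \<ge> 0" using assms by simp
  have a: "cl 0 K y0 = r" using r rK assms by (simp add: cl_ereal)
  have "cl 0 K y0 * cl 0 C yh \<ge> hi"
  proof (cases "yh \<ge> ereal C")
    case True
    then have "cl 0 C yh = C" using C0 by (cases yh) (auto simp: cl_def max_def min_def)
    then show ?thesis using a rK assms C0
      by (smt (verit, best) mult.commute mult_left_mono)
  next
    case False
    then obtain s where s: "yh = ereal s" "s < C" "0 \<le> s" using assms(5) by (cases yh) auto
    then have "cl 0 C yh = s" by (simp add: cl_ereal)
    moreover have "hi < r * s" using assms(6) r s by simp
    ultimately show ?thesis using a by simp
  qed
  then have "psi K C lo hi y0 yh = 1" using assms by (simp add: psi_def max_def min_def)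
  then show ?thesis using ph by (simp add: Tf_def)
qed




locale cevs =
  fixes M :: "'a measure" and X :: "int \<Rightarrow> 'a \<Rightarrow> real"
    and b :: "nat \<Rightarrow> real \<Rightarrow> real" and \<nu> :: "nat \<Rightarrow> (nat \<Rightarrow> ereal) measure"
    and \<alpha> :: real and \<kappa> :: "nat \<Rightarrow> real" and h :: nat and \<delta> :: real
  assumes ps: "prob_space M"
    and measX: "\<forall>t. X t \<in> borel_measurable M"
    and cev: "CEV M X b \<nu>"
    and apos: "\<alpha> > 0"
    and rvF: "regularly_varying (tailprob M X) (- \<alpha>)"
    and rvb: "\<forall>j\<ge>1. regularly_varying (b j) (\<kappa> j)"
    and h1: "h \<ge> 1"
    and fin: "emeasure (\<nu> h) (prod_exceed_set h (\<nu> h)) < \<infinity>"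
    and dpos: "\<delta> > 0"
    and mom: "((\<lambda>\<epsilon>. Limsup at_top (\<lambda>x.
            (\<integral>\<^sup>+\<omega>. ennreal (\<bar>X 0 \<omega> / x * indicator {\<omega>. X 0 \<omega> \<le> \<epsilon> * x} \<omega>
                              * (X (int h) \<omega> / b h x)\<bar> powr \<delta>) \<partial>M)
            / ennreal (tailprob M X x))) \<longlongrightarrow> 0) (at_right 0)"
begin

sublocale P: prob_space M by (rule ps)

abbreviation "F \<equiv> tailprob M X"
abbreviation "B \<equiv> b h"
abbreviation "N \<equiv> \<nu> h"

definition Sw :: "real \<Rightarrow> (nat \<Rightarrow> ereal) set" where
  "Sw w = {y \<in> space N. 0 < y 0 \<and> 0 \<le> y h \<and> ereal w < y 0 * y h}"

lemma measX'[measurable]: "X t \<in> borel_measurable M" using measX by auto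

lemma F_pos: "eventually (\<lambda>x. F x > 0) at_top"
  using rvF by (simp add: regularly_varying_def)

lemma F_ratio: "t > 0 \<Longrightarrow> ((\<lambda>x. F (t * x) / F x) \<longlongrightarrow> t powr (- \<alpha>)) at_top"
  using rvF by (simp add: regularly_varying_def)

lemma F_le1: "F x \<le> 1"
  by (simp add: tailprob_def)

lemma F_nonneg: "F x \<ge> 0"
  by (simp add: tailprob_def)

lemma F_mono: "x \<le> y \<Longrightarrow> F y \<le> F x"
  unfolding tailprob_def by (intro P.finite_measure_mono) auto

lemma B_pos: "x > 0 \<Longrightarrow> B x > 0"
  using cev h1 by (simp add: CEV_def)

lemma B_ratio: "t > 0 \<Longrightarrow> ((\<lambda>x. B (t * x) / B x) \<longlongrightarrow> t powr \<kappa> h) at_top"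
  using rvb h1 by (simp add: regularly_varying_def)

lemma radon: "cev_radon h N" using cev h1 by (simp add: CEV_def)

lemma vague: "cev_testfun h f \<Longrightarrow>
   ((\<lambda>x. (\<integral>\<omega>. f (cev_vec X b h x \<omega>) \<partial>M) / F x) \<longlongrightarrow> (\<integral>y. f y \<partial>N)) at_top"
  using cev h1 by (simp add: CEV_def cev_vague_def)

lemma setsN: "sets N = sets (PiM {0..h} (\<lambda>_. borel :: ereal measure))"
  using radon by (simp add: cev_radon_def)

lemma spaceN: "space N = space (PiM {0..h} (\<lambda>_. borel :: ereal measure))"
  using setsN by (rule sets_eq_imp_space_eq)

lemma finN: "e > 0 \<Longrightarrow> emeasure N {y \<in> space N. ereal e \<le> y 0} < \<infinity>"
  using radon by (simp add: cev_radon_def)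

lemma vec0: "cev_vec X b h x \<omega> 0 = ereal (X 0 \<omega> / x)"
  by (simp add: cev_vec_def)

lemma vech: "cev_vec X b h x \<omega> h = ereal (X (int h) \<omega> / B x)"
  using h1 by (simp add: cev_vec_def)

lemma compN[measurable]: "i \<in> {0..h} \<Longrightarrow> (\<lambda>y. y i) \<in> borel_measurable N"
  by (subst measurable_cong_sets[OF setsN refl]) measurable

lemma comp0[measurable]: "(\<lambda>y. y 0) \<in> borel_measurable N" by (rule compN) simp
lemma comph[measurable]: "(\<lambda>y. y h) \<in> borel_measurable N" by (rule compN) simp

lemma Sw_sets[measurable]: "Sw w \<in> sets N"
  unfolding Sw_def by measurable

lemma S1: "prod_exceed_set h N = Sw 1"
  by (simp add: prod_exceed_set_def Sw_def one_ereal_def)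

lemma Sw_mono: "w \<le> w' \<Longrightarrow> Sw w' \<subseteq> Sw w"
  unfolding Sw_def by (auto intro: le_less_trans[of "ereal w" "ereal w'"])

lemma Sw_fin: "w \<ge> 1 \<Longrightarrow> emeasure N (Sw w) < \<infinity>"
  using fin S1 Sw_mono[of 1 w] emeasure_mono[of "Sw w" "Sw 1" N]
  by (metis Sw_sets le_less_trans)

lemma testfun_Tf: "e > 0 \<Longrightarrow> K \<ge> 0 \<Longrightarrow> C \<ge> 0 \<Longrightarrow>
   cev_testfun h (\<lambda>y. Tf e K C lo hi (y 0) (y h))"
  unfolding cev_testfun_def
proof (intro conjI)
  assume "e > 0" "K \<ge> 0" "C \<ge> 0"
  then show "continuous_map (product_topology (\<lambda>_. euclidean) {0..h}) euclideanreal
     (\<lambda>y. Tf e K C lo hi (y 0) (y h))"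
    by (intro Tf_cont) auto
  show "\<exists>\<epsilon>>0. \<forall>y. y 0 < ereal \<epsilon> \<longrightarrow> Tf e K C lo hi (y 0) (y h) = 0"
    using \<open>e > 0\<close> by (intro exI[of _ "e/2"]) (auto simp: Tf_def phi_zero)
qed

lemma testfun_phi: "a > 0 \<Longrightarrow> cev_testfun h (\<lambda>y. phi a (y 0))"
  unfolding cev_testfun_def
proof (intro conjI)
  assume "a > 0"
  then show "continuous_map (product_topology (\<lambda>_. euclidean) {0..h}) euclideanreal
     (\<lambda>y. phi a (y 0))"
    by (intro phi_cont) auto
  show "\<exists>\<epsilon>>0. \<forall>y. y 0 < ereal \<epsilon> \<longrightarrow> phi a (y 0) = 0"
    using \<open>a > 0\<close> by (intro exI[of _ "a/2"]) (auto simp: phi_zero)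
qed

lemma Tf_measN[measurable]: "(\<lambda>y. Tf e K C lo hi (y 0) (y h)) \<in> borel_measurable N"
  unfolding Tf_def psi_def phi_def by measurable

lemma phi_measN[measurable]: "(\<lambda>y. phi a (y 0)) \<in> borel_measurable N"
  unfolding phi_def by measurable

lemma Tf_measM[measurable]: "(\<lambda>\<omega>. Tf e K C lo hi (ereal (X 0 \<omega> / x)) (ereal (X (int h) \<omega> / B x))) \<in> borel_measurable M"
  unfolding Tf_def psi_def phi_def by measurable

lemma phi_measM[measurable]: "(\<lambda>\<omega>. phi a (ereal (X 0 \<omega> / x))) \<in> borel_measurable M"
  unfolding phi_def by measurable

end



context cevs begin

lemma intN:
  fixes f :: "(nat \<Rightarrow> ereal) \<Rightarrow> real"
  assumes f[measurable]: "f \<in> borel_measurable N" and a: "a > 0"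
    and b1: "\<And>y. y \<in> space N \<Longrightarrow> \<bar>f y\<bar> \<le> 1"
    and z: "\<And>y. y \<in> space N \<Longrightarrow> y 0 < ereal a \<Longrightarrow> f y = 0"
  shows "integrable N f"
proof -
  have ii: "integrable N (indicat_real {y \<in> space N. ereal a \<le> y 0})"
    using finN[OF a] by (intro integrable_real_indicator) measurable
  show ?thesis
  proof (rule Bochner_Integration.integrable_bound[OF ii f])
    show "AE x in N. norm (f x) \<le> norm (indicat_real {y \<in> space N. ereal a \<le> y 0} x)"
      using b1 z by (intro AE_I2) (auto simp: indicator_def not_le)
  qed
qed

lemma N_int_ge:
  fixes f :: "(nat \<Rightarrow> ereal) \<Rightarrow> real"
  assumes f[measurable]: "f \<in> borel_measurable N" and a: "a > 0"
    and b1: "\<And>y. y \<in> space N \<Longrightarrow> 0 \<le> f y \<and> f y \<le> 1"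
    and z: "\<And>y. y \<in> space N \<Longrightarrow> y 0 < ereal a \<Longrightarrow> f y = 0"
    and A: "A \<in> sets N" "emeasure N A < \<infinity>" and one: "\<And>y. y \<in> A \<Longrightarrow> f y = 1"
  shows "measure N A \<le> (\<integral>y. f y \<partial>N)"
proof -
  have "measure N A = (\<integral>y. indicator A y \<partial>N)"
    using A by (simp add: Int_absorb2 sets.sets_into_space)
  also have "\<dots> \<le> (\<integral>y. f y \<partial>N)"
  proof (rule integral_mono)
    show "integrable N (indicator A :: _ \<Rightarrow> real)" using A by auto
    show "integrable N f" by (rule intN[OF f a]) (use b1 z in auto)
    fix y assume "y \<in> space N"
    then show "indicator A y \<le> f y" using b1 one by (auto simp: indicator_def)
  qed
  finally show ?thesis .
qed

lemma N_int_le: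
  fixes f :: "(nat \<Rightarrow> ereal) \<Rightarrow> real"
  assumes f[measurable]: "f \<in> borel_measurable N" and a: "a > 0"
    and b1: "\<And>y. y \<in> space N \<Longrightarrow> 0 \<le> f y \<and> f y \<le> 1"
    and z: "\<And>y. y \<in> space N \<Longrightarrow> y 0 < ereal a \<Longrightarrow> f y = 0"
    and A: "A \<in> sets N" "emeasure N A < \<infinity>" and out: "\<And>y. y \<in> space N \<Longrightarrow> f y > 0 \<Longrightarrow> y \<in> A"
  shows "(\<integral>y. f y \<partial>N) \<le> measure N A"
proof -
  have "(\<integral>y. f y \<partial>N) \<le> (\<integral>y. indicator A y \<partial>N)"
  proof (rule integral_mono)
    show "integrable N (indicator A :: _ \<Rightarrow> real)" using A by auto
    show "integrable N f" by (rule intN[OF f a]) (use b1 z in auto)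
    fix y assume "y \<in> space N"
    then show "f y \<le> indicator A y" using b1 out
      by (cases "f y > 0") (auto simp: indicator_def)
  qed
  also have "\<dots> = measure N A"
    using A by (simp add: Int_absorb2 sets.sets_into_space)
  finally show ?thesis .
qed

lemma M_int_le:
  fixes f :: "'a \<Rightarrow> real"
  assumes f[measurable]: "f \<in> borel_measurable M" and E: "E \<in> sets M"
    and b1: "\<And>\<omega>. \<omega> \<in> space M \<Longrightarrow> 0 \<le> f \<omega> \<and> f \<omega> \<le> 1"
    and out: "\<And>\<omega>. \<omega> \<in> space M \<Longrightarrow> f \<omega> > 0 \<Longrightarrow> \<omega> \<in> E"
  shows "(\<integral>\<omega>. f \<omega> \<partial>M) \<le> measure M E"
proof -
  have "(\<integral>\<omega>. f \<omega> \<partial>M) \<le> (\<integral>\<omega>. indicator E \<omega> \<partial>M)"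
  proof (rule integral_mono)
    show "integrable M (indicator E :: _ \<Rightarrow> real)"
      by (rule integrable_real_indicator[OF E]) (simp add: P.emeasure_finite less_top[symmetric])
    show "integrable M f" by (rule P.integrable_const_bound[where B=1]) (use b1 in auto)
    fix \<omega> assume "\<omega> \<in> space M"
    then show "f \<omega> \<le> indicator E \<omega>" using b1 out
      by (cases "f \<omega> > 0") (auto simp: indicator_def)
  qed
  also have "\<dots> = measure M E"
    using E by (simp add: Int_absorb2 sets.sets_into_space)
  finally show ?thesis .
qed

lemma M_int_ge:
  fixes f :: "'a \<Rightarrow> real"
  assumes f[measurable]: "f \<in> borel_measurable M" and E: "E \<in> sets M"
    and b1: "\<And>\<omega>. \<omega> \<in> space M \<Longrightarrow> 0 \<le> f \<omega> \<and> f \<omega> \<le> 1"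
    and one: "\<And>\<omega>. \<omega> \<in> E \<Longrightarrow> f \<omega> = 1"
  shows "measure M E \<le> (\<integral>\<omega>. f \<omega> \<partial>M)"
proof -
  have "measure M E = (\<integral>\<omega>. indicator E \<omega> \<partial>M)"
    using E by (simp add: Int_absorb2 sets.sets_into_space)
  also have "\<dots> \<le> (\<integral>\<omega>. f \<omega> \<partial>M)"
  proof (rule integral_mono)
    show "integrable M (indicator E :: _ \<Rightarrow> real)"
      by (rule integrable_real_indicator[OF E]) (simp add: P.emeasure_finite less_top[symmetric])
    show "integrable M f" by (rule P.integrable_const_bound[where B=1]) (use b1 in auto)
    fix \<omega> assume "\<omega> \<in> space M"
    then show "indicator E \<omega> \<le> f \<omega>" using b1 one by (auto simp: indicator_def)
  qed
  finally show ?thesis .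
qed

lemma nu_tail:
  assumes K: "K > 0"
  shows "measure N {y \<in> space N. ereal K \<le> y 0} \<le> (K/2) powr (- \<alpha>)"
proof -
  have lim: "((\<lambda>x. (\<integral>\<omega>. phi K (ereal (X 0 \<omega> / x)) \<partial>M) / F x) \<longlongrightarrow> (\<integral>y. phi K (y 0) \<partial>N)) at_top"
    using vague[OF testfun_phi[OF K]] by (simp add: vec0)
  have lim2: "((\<lambda>x. F ((K/2) * x) / F x) \<longlongrightarrow> (K/2) powr (- \<alpha>)) at_top"
    using F_ratio[of "K/2"] K by simp
  have ev: "eventually (\<lambda>x. (\<integral>\<omega>. phi K (ereal (X 0 \<omega> / x)) \<partial>M) / F x \<le> F ((K/2) * x) / F x) at_top"
    using F_pos eventually_gt_at_top[of 0]
  proof eventually_elim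
    case (elim x)
    have "(\<integral>\<omega>. phi K (ereal (X 0 \<omega> / x)) \<partial>M) \<le> measure M {\<omega> \<in> space M. X 0 \<omega> > (K/2) * x}"
    proof (rule M_int_le)
      fix \<omega> assume "\<omega> \<in> space M" "phi K (ereal (X 0 \<omega> / x)) > 0"
      then have "ereal (K/2) < ereal (X 0 \<omega> / x)" using phi_pos K by blast
      then show "\<omega> \<in> {\<omega> \<in> space M. X 0 \<omega> > (K/2) * x}"
        using \<open>\<omega> \<in> space M\<close> elim by (simp add: field_simps)
    qed (use phi_bounds K in auto)
    then show ?case using elim by (simp add: tailprob_def divide_right_mono)
  qed
  have le: "(\<integral>y. phi K (y 0) \<partial>N) \<le> (K/2) powr (- \<alpha>)"
    using tendsto_le[OF _ lim2 lim ev] by simp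
  have "measure N {y \<in> space N. ereal K \<le> y 0} \<le> (\<integral>y. phi K (y 0) \<partial>N)"
  proof (rule N_int_ge[where a="K/2"])
    show "emeasure N {y \<in> space N. ereal K \<le> y 0} < \<infinity>" using finN K by auto
  qed (use K phi_bounds phi_zero phi_one in auto)
  with le show ?thesis by simp
qed

end



lemma ev_scale:
  fixes t :: real
  assumes "t > 0" "eventually (\<lambda>x. P (t * x)) at_top"
  shows "eventually P at_top"
proof -
  obtain N where N: "\<And>x. x \<ge> N \<Longrightarrow> P (t * x)" using assms(2) by (auto simp: eventually_at_top_linorder)
  show ?thesis unfolding eventually_at_top_linorder
  proof (intro exI[of _ "t * N"] allI impI)
    fix y assume "y \<ge> t * N"
    then have "y / t \<ge> N" using assms(1) by (simp add: field_simps)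
    then have "P (t * (y / t))" by (rule N)
    then show "P y" using assms(1) by simp
  qed
qed

lemma ev_mult:
  fixes t :: real
  assumes "t > 0" "eventually P at_top"
  shows "eventually (\<lambda>x. P (t * x)) at_top"
proof -
  obtain N where N: "\<And>x. x \<ge> N \<Longrightarrow> P x" using assms(2) by (auto simp: eventually_at_top_linorder)
  show ?thesis unfolding eventually_at_top_linorder
  proof (intro exI[of _ "N / t"] allI impI)
    fix y assume "y \<ge> N / t"
    then have "t * y \<ge> N" using assms(1) by (simp add: field_simps)
    then show "P (t * y)" by (rule N)
  qed
qed

context cevs begin

lemma nu_lower:
  assumes e: "e > 0"
  shows "\<exists>\<epsilon> K. 0 < \<epsilon> \<and> \<epsilon> < K \<and>
    measure N (Sw 1 \<inter> {y. ereal \<epsilon> \<le> y 0 \<and> y 0 \<le> ereal K}) \<ge> measure N (Sw 1) - e"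
proof -
  define A where "A n = Sw 1 \<inter> {y \<in> space N. ereal (1 / Suc n) \<le> y 0}" for n :: nat
  have Asets: "range A \<subseteq> sets N" unfolding A_def by auto
  have inc: "incseq A"
  proof (rule incseq_SucI)
    fix n
    have "ereal (1 / Suc (Suc n)) \<le> ereal (1 / Suc n)" by (simp add: frac_le)
    then show "A n \<subseteq> A (Suc n)" unfolding A_def
      using order_trans[of "ereal (1 / Suc (Suc n))" "ereal (1 / Suc n)"] by blast
  qed
  have UA: "(\<Union>i. A i) = Sw 1"
  proof
    show "(\<Union>i. A i) \<subseteq> Sw 1" unfolding A_def by auto
    show "Sw 1 \<subseteq> (\<Union>i. A i)"
    proof
      fix y assume y: "y \<in> Sw 1"
      then have y0: "0 < y 0" "y \<in> space N" by (auto simp: Sw_def)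
      have "\<exists>n. ereal (1 / Suc n) \<le> y 0"
      proof (cases "y 0")
        case (real r)
        then have "r > 0" using y0 by simp
        then obtain n where "inverse (Suc n) < r"
          using reals_Archimedean by blast
        then have "1 / Suc n < r" by (simp add: divide_inverse)
        then show ?thesis using real by (intro exI[of _ n]) simp
      qed (use y0 in auto)
      then show "y \<in> (\<Union>i. A i)" using y y0 unfolding A_def by auto
    qed
  qed
  have lim: "(\<lambda>i. measure N (A i)) \<longlonglongrightarrow> measure N (Sw 1)"
    using Lim_measure_incseq[OF Asets inc] UA Sw_fin[of 1] by simp
  have "eventually (\<lambda>i. measure N (A i) > measure N (Sw 1) - e/2) sequentially"
    by (rule order_tendstoD(1)[OF lim]) (use e in simp)
  then obtain n0 where "\<forall>i\<ge>n0. measure N (A i) > measure N (Sw 1) - e/2"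
    by (auto simp: eventually_sequentially)
  then obtain n where n: "measure N (A n) > measure N (Sw 1) - e/2" by blast
  have fl: "filterlim (\<lambda>K::real. K/2) at_top at_top"
    unfolding filterlim_at_top
  proof
    fix Z :: real
    show "eventually (\<lambda>K. Z \<le> K/2) at_top"
      using eventually_ge_at_top[of "2*Z"] by eventually_elim simp
  qed
  have "((\<lambda>K. (K/2) powr (- \<alpha>)) \<longlongrightarrow> 0) at_top"
    using apos fl by (intro tendsto_neg_powr) auto
  then have "eventually (\<lambda>K. (K/2) powr (- \<alpha>) < e/2) at_top"
    using e by (intro order_tendstoD(2)) auto
  moreover have "eventually (\<lambda>K. K > 1 / Suc n) at_top" by (rule eventually_gt_at_top)
  ultimately have "eventually (\<lambda>K. (K/2) powr (- \<alpha>) < e/2 \<and> K > 1 / Suc n) at_top"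
    by (rule eventually_conj)
  then obtain K0 where "\<forall>K\<ge>K0. (K/2) powr (- \<alpha>) < e/2 \<and> K > 1 / Suc n"
    by (auto simp: eventually_at_top_linorder)
  then have K: "(K0/2) powr (- \<alpha>) < e/2" "K0 > 1 / Suc n" by auto
  have "(0::real) < 1 / Suc n" by simp
  then have Kpos: "K0 > 0" using K(2) by linarith
  define K where "K = K0"
  note K = K[folded K_def] and Kpos = Kpos[folded K_def]
  define Bx where "Bx = Sw 1 \<inter> {y. ereal (1 / Suc n) \<le> y 0 \<and> y 0 \<le> ereal K}"
  define T where "T = {y \<in> space N. ereal K \<le> y 0}"
  have Bsets: "Bx \<in> sets N" unfolding Bx_def
  proof -
    have "Sw 1 \<inter> {y. ereal (1 / Suc n) \<le> y 0 \<and> y 0 \<le> ereal K} =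
        {y \<in> space N. y \<in> Sw 1 \<and> ereal (1 / Suc n) \<le> y 0 \<and> y 0 \<le> ereal K}"
      by (auto simp: Sw_def)
    also have "\<dots> \<in> sets N" by measurable
    finally show "Sw 1 \<inter> {y. ereal (1 / Suc n) \<le> y 0 \<and> y 0 \<le> ereal K} \<in> sets N" .
  qed
  have Tsets: "T \<in> sets N" unfolding T_def by measurable
  have Tfin: "emeasure N T \<noteq> \<infinity>" using finN[OF Kpos] by (simp add: T_def)
  have Bfin: "emeasure N Bx \<noteq> \<infinity>"
    using emeasure_mono[of Bx "Sw 1" N] Sw_fin[of 1] by (auto simp: Bx_def top_unique)
  have "A n \<subseteq> Bx \<union> T" unfolding A_def Bx_def T_def Sw_def by auto
  then have "measure N (A n) \<le> measure N (Bx \<union> T)"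
    using Bsets Tsets Bfin Tfin
    by (intro measure_mono_fmeasurable fmeasurable.Un fmeasurableI) (auto simp: A_def less_top)
  also have "\<dots> \<le> measure N Bx + measure N T"
    by (rule measure_subadditive[OF Bsets Tsets Bfin Tfin])
  also have "measure N T \<le> (K/2) powr (- \<alpha>)" unfolding T_def by (rule nu_tail[OF Kpos])
  finally have "measure N Bx \<ge> measure N (Sw 1) - e" using n K by simp
  then show ?thesis using K(2) by (intro exI[of _ "1 / Suc n"] exI[of _ K]) (auto simp: Bx_def)
qed

end



lemma Tf_zero: "e > 0 \<Longrightarrow> y0 < ereal (e/2) \<Longrightarrow> Tf e K C lo hi y0 yh = 0"
  by (simp add: Tf_def phi_zero)

context cevs begin

definition Ev :: "real \<Rightarrow> real \<Rightarrow> 'a set" where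
  "Ev x u = {\<omega> \<in> space M. X 0 \<omega> * X (int h) \<omega> > x * B x * u}"

definition R :: "real \<Rightarrow> real \<Rightarrow> real" where
  "R u x = measure M (Ev x u) / F x"

definition c0 :: real where "c0 = measure N (Sw 1)"

definition p :: real where "p = 1 + \<kappa> h"

lemma Ev_sets[measurable]: "Ev x u \<in> sets M"
  unfolding Ev_def by measurable

lemma c0_nonneg: "c0 \<ge> 0" by (simp add: c0_def)

lemma F_inv_ratio: "t > 0 \<Longrightarrow> ((\<lambda>x. F x / F (t * x)) \<longlongrightarrow> t powr \<alpha>) at_top"
proof -
  assume t: "t > 0"
  have "((\<lambda>x. inverse (F (t * x) / F x)) \<longlongrightarrow> inverse (t powr (- \<alpha>))) at_top"
    using t by (intro tendsto_inverse F_ratio) auto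
  then show ?thesis using t by (simp add: powr_minus)
qed

lemma r_lim: "t > 0 \<Longrightarrow> ((\<lambda>x. t * (B (t * x) / B x) * u) \<longlongrightarrow> t powr p * u) at_top"
proof -
  assume t: "t > 0"
  have "((\<lambda>x. t * (B (t * x) / B x) * u) \<longlongrightarrow> t * t powr \<kappa> h * u) at_top"
    using t by (intro tendsto_intros B_ratio)
  moreover have "t * t powr \<kappa> h = t powr p" using t by (simp add: p_def powr_add)
  ultimately show ?thesis by simp
qed

lemma Ev_sub:
  assumes "x > 0" "t > 0" "t * (B (t * x) / B x) * u \<le> v"
  shows "Ev x v \<subseteq> Ev (t * x) u"
proof -
  have Bx: "B x > 0" using B_pos assms by auto
  have "t * x * B (t * x) * u = x * B x * (t * (B (t * x) / B x) * u)" using Bx by (simp add: field_simps)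
  also have "\<dots> \<le> x * B x * v" using assms Bx by (intro mult_left_mono) auto
  finally show ?thesis unfolding Ev_def by auto
qed

lemma Ev_sub2:
  assumes "x > 0" "t > 0" "t * (B (t * x) / B x) * u \<ge> v"
  shows "Ev (t * x) u \<subseteq> Ev x v"
proof -
  have Bx: "B x > 0" using B_pos assms by auto
  have "x * B x * v \<le> x * B x * (t * (B (t * x) / B x) * u)" using assms Bx by (intro mult_left_mono) auto
  also have "\<dots> = t * x * B (t * x) * u" using Bx by (simp add: field_simps)
  finally show ?thesis unfolding Ev_def by auto
qed

lemma Tf_vec: "(\<lambda>\<omega>. Tf e K C lo hi (cev_vec X b h x \<omega> 0) (cev_vec X b h x \<omega> h)) =
    (\<lambda>\<omega>. Tf e K C lo hi (ereal (X 0 \<omega> / x)) (ereal (X (int h) \<omega> / B x)))"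
  by (simp add: vec0 vech)

lemma vague_Tf: "e > 0 \<Longrightarrow> K \<ge> 0 \<Longrightarrow> C \<ge> 0 \<Longrightarrow>
  ((\<lambda>x. (\<integral>\<omega>. Tf e K C lo hi (ereal (X 0 \<omega> / x)) (ereal (X (int h) \<omega> / B x)) \<partial>M) / F x)
     \<longlongrightarrow> (\<integral>y. Tf e K C lo hi (y 0) (y h) \<partial>N)) at_top"
  using vague[OF testfun_Tf, of e K C lo hi] by (simp add: vec0 vech)

lemma LB:
  assumes t: "t > 0" and u: "u > 0" and tu: "t powr p * u < 1" and e: "e > 0"
  shows "eventually (\<lambda>x. R u x \<ge> t powr \<alpha> * c0 - e) at_top"
proof -
  define v where "v = (t powr p * u + 1) / 2"
  have tp: "t powr p * u > 0" using t u by simp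
  have v: "v < 1" "t powr p * u < v" "0 < v" using tu tp unfolding v_def by (simp_all add: field_simps)
  define e1 where "e1 = e / (2 * (t powr \<alpha> + 1))"
  have tpa: "t powr \<alpha> \<ge> 0" by simp
  have e1: "e1 > 0" unfolding e1_def using e by (intro divide_pos_pos mult_pos_pos add_nonneg_pos[OF tpa]) auto
  have e1t: "e1 * t powr \<alpha> \<le> e / 2"
  proof -
    have "e1 * t powr \<alpha> = e / 2 * (t powr \<alpha> / (t powr \<alpha> + 1))"
      by (simp add: e1_def)
    also have "\<dots> \<le> e / 2 * 1"
    proof (intro mult_left_mono)
      have d: "t powr \<alpha> + 1 > 0" by (rule add_nonneg_pos[OF tpa]) simp
      then show "t powr \<alpha> / (t powr \<alpha> + 1) \<le> 1" by (simp add: divide_le_eq)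
    qed (use e in auto)
    finally show ?thesis by simp
  qed
  obtain \<epsilon> K where eK: "0 < \<epsilon>" "\<epsilon> < K"
    and nl: "measure N (Sw 1 \<inter> {y. ereal \<epsilon> \<le> y 0 \<and> y 0 \<le> ereal K}) \<ge> measure N (Sw 1) - e1"
    using nu_lower[OF e1] by blast
  define C where "C = 1 / \<epsilon>"
  have C: "C \<ge> 0" "C * \<epsilon> = 1" using eK by (auto simp: C_def)
  define I where "I = (\<integral>y. Tf \<epsilon> K C v 1 (y 0) (y h) \<partial>N)"
  define Bx where "Bx = Sw 1 \<inter> {y. ereal \<epsilon> \<le> y 0 \<and> y 0 \<le> ereal K}"
  have Bx_eq: "Bx = {y \<in> space N. y \<in> Sw 1 \<and> ereal \<epsilon> \<le> y 0 \<and> y 0 \<le> ereal K}"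
    by (auto simp: Bx_def Sw_def)
  have Bsets: "Bx \<in> sets N" unfolding Bx_eq by measurable
  have Bfin: "emeasure N Bx < \<infinity>"
    using emeasure_mono[of Bx "Sw 1" N] Sw_fin[of 1] by (auto simp: Bx_def)
  have "measure N Bx \<le> I" unfolding I_def
  proof (rule N_int_ge[where a="\<epsilon>/2"])
    fix y assume "y \<in> Bx"
    then show "Tf \<epsilon> K C v 1 (y 0) (y h) = 1"
      using v eK C by (intro Tf_one) (auto simp: Bx_def Sw_def one_ereal_def)
  qed (use eK v Bsets Bfin Tf_bounds Tf_zero in auto)
  then have I: "I \<ge> c0 - e1" using nl by (simp add: c0_def Bx_def)
  have lim1: "((\<lambda>x. (\<integral>\<omega>. Tf \<epsilon> K C v 1 (ereal (X 0 \<omega> / x)) (ereal (X (int h) \<omega> / B x)) \<partial>M) / F x)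
     \<longlongrightarrow> I) at_top"
    unfolding I_def using eK C by (intro vague_Tf) auto
  define L where "L x = (\<integral>\<omega>. Tf \<epsilon> K C v 1 (ereal (X 0 \<omega> / x)) (ereal (X (int h) \<omega> / B x)) \<partial>M) / F x
      * (F x / F (t * x))" for x
  have limL: "(L \<longlongrightarrow> I * t powr \<alpha>) at_top"
    unfolding L_def using t by (intro tendsto_mult lim1 F_inv_ratio)
  have evL: "eventually (\<lambda>x. L x > I * t powr \<alpha> - e/2) at_top"
    using e by (intro order_tendstoD(1)[OF limL]) auto
  have evr: "eventually (\<lambda>x. t * (B (t * x) / B x) * u < v) at_top"
    using v by (intro order_tendstoD(2)[OF r_lim[OF t]]) auto
  have "eventually (\<lambda>x. R u (t * x) \<ge> t powr \<alpha> * c0 - e) at_top"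
    using evL evr F_pos ev_mult[OF t F_pos] eventually_gt_at_top[of 0]
  proof eventually_elim
    case (elim x)
    have Bx0: "B x > 0" using B_pos elim by auto
    have "(\<integral>\<omega>. Tf \<epsilon> K C v 1 (ereal (X 0 \<omega> / x)) (ereal (X (int h) \<omega> / B x)) \<partial>M) \<le> measure M (Ev x v)"
    proof (rule M_int_le)
      fix \<omega> assume \<omega>: "\<omega> \<in> space M" "Tf \<epsilon> K C v 1 (ereal (X 0 \<omega> / x)) (ereal (X (int h) \<omega> / B x)) > 0"
      have "ereal v < ereal (X 0 \<omega> / x) * ereal (X (int h) \<omega> / B x)"
        using Tf_pos[OF _ _ _ _ _ \<omega>(2)] eK v C by auto
      then have "v < X 0 \<omega> * X (int h) \<omega> / (x * B x)" by simp
      then have "x * B x * v < X 0 \<omega> * X (int h) \<omega>" using elim Bx0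
        by (simp add: pos_less_divide_eq mult.commute)
      then show "\<omega> \<in> Ev x v" using \<omega> by (simp add: Ev_def)
    qed (use eK v Tf_bounds in auto)
    also have "\<dots> \<le> measure M (Ev (t * x) u)"
      using Ev_sub[of x t u v] elim t by (intro P.finite_measure_mono) auto
    finally have le: "(\<integral>\<omega>. Tf \<epsilon> K C v 1 (ereal (X 0 \<omega> / x)) (ereal (X (int h) \<omega> / B x)) \<partial>M)
       \<le> measure M (Ev (t * x) u)" .
    have "L x = (\<integral>\<omega>. Tf \<epsilon> K C v 1 (ereal (X 0 \<omega> / x)) (ereal (X (int h) \<omega> / B x)) \<partial>M) / F (t * x)"
      using elim by (simp add: L_def)
    also have "\<dots> \<le> R u (t * x)" unfolding R_def using le elim by (intro divide_right_mono) auto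
    finally have "R u (t * x) > I * t powr \<alpha> - e/2" using elim by simp
    moreover have "I * t powr \<alpha> \<ge> (c0 - e1) * t powr \<alpha>" using I by (intro mult_right_mono) auto
    ultimately show ?case using e1t by (simp add: algebra_simps)
  qed
  then show ?thesis by (rule ev_scale[OF t])
qed

end



context cevs begin

definition Imom :: "real \<Rightarrow> real \<Rightarrow> ennreal" where
  "Imom \<epsilon> x = (\<integral>\<^sup>+\<omega>. ennreal (\<bar>X 0 \<omega> / x * indicator {\<omega>. X 0 \<omega> \<le> \<epsilon> * x} \<omega>
                              * (X (int h) \<omega> / b h x)\<bar> powr \<delta>) \<partial>M)"

lemma mom_eps:
  assumes m: "m > 0"
  shows "\<exists>\<epsilon>0>0. \<forall>\<epsilon>. 0 < \<epsilon> \<longrightarrow> \<epsilon> < \<epsilon>0 \<longrightarrow>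
     eventually (\<lambda>x. Imom \<epsilon> x / ennreal (F x) < ennreal m) at_top"
proof -
  have "eventually (\<lambda>\<epsilon>. Limsup at_top (\<lambda>x. Imom \<epsilon> x / ennreal (F x)) < ennreal m) (at_right 0)"
    using m mom unfolding Imom_def by (intro order_tendstoD(2)) auto
  then obtain b where b: "b > 0" "\<And>\<epsilon>. \<epsilon> > 0 \<Longrightarrow> \<epsilon> < b \<Longrightarrow>
      Limsup at_top (\<lambda>x. Imom \<epsilon> x / ennreal (F x)) < ennreal m"
    unfolding eventually_at_right_field by auto
  show ?thesis
    using b by (intro exI[of _ b]) (auto intro: Limsup_lessD)
qed

lemma markov:
  assumes x: "x > 0" and v: "v > 0" and Fx: "F x > 0"
    and mI: "Imom \<epsilon> x / ennreal (F x) < ennreal m"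
  shows "measure M {\<omega> \<in> space M. X 0 \<omega> \<le> \<epsilon> * x \<and> v \<le> \<bar>X 0 \<omega> / x * (X (int h) \<omega> / B x)\<bar>}
     \<le> v powr (- \<delta>) * m * F x"
proof -
  define U where "U \<omega> = ennreal (\<bar>X 0 \<omega> / x * indicator {\<omega>. X 0 \<omega> \<le> \<epsilon> * x} \<omega>
                              * (X (int h) \<omega> / b h x)\<bar> powr \<delta>)" for \<omega>
  define E3 where "E3 = {\<omega> \<in> space M. X 0 \<omega> \<le> \<epsilon> * x \<and> v \<le> \<bar>X 0 \<omega> / x * (X (int h) \<omega> / B x)\<bar>}"
  have Um[measurable]: "U \<in> borel_measurable M" unfolding U_def by measurable
  have m0: "m \<ge> 0"
  proof (rule ccontr)
    assume "\<not> m \<ge> 0" then have "ennreal m = 0" by (simp add: ennreal_eq_0_iff)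
    then show False using mI by simp
  qed
  have sub: "E3 \<subseteq> {\<omega> \<in> space M. 1 \<le> ennreal (v powr (- \<delta>)) * U \<omega>}"
  proof
    fix \<omega> assume \<omega>: "\<omega> \<in> E3"
    then have ind: "indicator {\<omega>. X 0 \<omega> \<le> \<epsilon> * x} \<omega> = (1::real)" by (simp add: E3_def)
    have ge: "v \<le> \<bar>X 0 \<omega> / x * (X (int h) \<omega> / B x)\<bar>" using \<omega> by (simp add: E3_def)
    have "v powr \<delta> \<le> \<bar>X 0 \<omega> / x * (X (int h) \<omega> / B x)\<bar> powr \<delta>"
      using ge v dpos by (intro powr_mono2) auto
    then have "v powr (- \<delta>) * v powr \<delta> \<le> v powr (- \<delta>) * \<bar>X 0 \<omega> / x * (X (int h) \<omega> / B x)\<bar> powr \<delta>"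
      by (intro mult_left_mono) auto
    moreover have "v powr (- \<delta>) * v powr \<delta> = 1" using v by (simp add: powr_minus)
    ultimately have "1 \<le> v powr (- \<delta>) * \<bar>X 0 \<omega> / x * (X (int h) \<omega> / B x)\<bar> powr \<delta>" by simp
    then have "ennreal 1 \<le> ennreal (v powr (- \<delta>) * \<bar>X 0 \<omega> / x * (X (int h) \<omega> / B x)\<bar> powr \<delta>)"
      by (rule ennreal_leI)
    also have "\<dots> = ennreal (v powr (- \<delta>)) * U \<omega>"
      unfolding U_def using ind by (simp add: ennreal_mult)
    finally show "\<omega> \<in> {\<omega> \<in> space M. 1 \<le> ennreal (v powr (- \<delta>)) * U \<omega>}"
      using \<omega> by (simp add: E3_def)
  qed
  have "emeasure M E3 \<le> emeasure M {\<omega> \<in> space M. 1 \<le> ennreal (v powr (- \<delta>)) * U \<omega>}"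
    using sub by (intro emeasure_mono) measurable
  also have "\<dots> \<le> ennreal (v powr (- \<delta>)) * (\<integral>\<^sup>+ \<omega>. U \<omega> * indicator (space M) \<omega> \<partial>M)"
    by (rule nn_integral_Markov_inequality) measurable
  also have "(\<integral>\<^sup>+ \<omega>. U \<omega> * indicator (space M) \<omega> \<partial>M) = Imom \<epsilon> x"
    unfolding Imom_def U_def by (intro nn_integral_cong) simp
  also have "Imom \<epsilon> x \<le> ennreal m * ennreal (F x)"
    using mI Fx by (subst (asm) divide_less_ennreal) auto
  also have "ennreal (v powr (- \<delta>)) * (ennreal m * ennreal (F x)) = ennreal (v powr (- \<delta>) * m * F x)"
    using m0 Fx by (simp add: ennreal_mult mult.assoc)
  finally have "emeasure M E3 \<le> ennreal (v powr (- \<delta>) * m * F x)"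
    by (simp add: mult_left_mono)
  then show ?thesis
    unfolding E3_def[symmetric] P.emeasure_eq_measure using m0 Fx
    by (subst (asm) ennreal_le_iff) auto
qed

end



context cevs begin

lemma UB:
  assumes t: "t > 0" and u: "u > 0" and tu: "t powr p * u > 1" and e: "e > 0"
  shows "eventually (\<lambda>x. R u x \<le> t powr \<alpha> * c0 + e) at_top"
proof -
  define v where "v = (t powr p * u + 1) / 2"
  have v: "1 < v" "v < t powr p * u" "0 < v" using tu unfolding v_def by (simp_all add: field_simps)
  define e1 where "e1 = e / (4 * (t powr \<alpha> + 1))"
  have tpa: "t powr \<alpha> \<ge> 0" by simp
  have tpa': "t powr \<alpha> > 0" using t by simp
  have e1: "e1 > 0" unfolding e1_def using e by (intro divide_pos_pos mult_pos_pos add_nonneg_pos[OF tpa]) auto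
  have e1t: "e1 * t powr \<alpha> \<le> e / 4"
  proof -
    have "e1 * t powr \<alpha> = e / 4 * (t powr \<alpha> / (t powr \<alpha> + 1))"
      by (simp add: e1_def)
    also have "\<dots> \<le> e / 4 * 1"
    proof (intro mult_left_mono)
      have d: "t powr \<alpha> + 1 > 0" by (rule add_nonneg_pos[OF tpa]) simp
      then show "t powr \<alpha> / (t powr \<alpha> + 1) \<le> 1" by (simp add: divide_le_eq)
    qed (use e in auto)
    finally show ?thesis by simp
  qed
  define m where "m = e1 * v powr \<delta>"
  have m: "m > 0" using e1 v by (simp add: m_def)
  have vm: "v powr (- \<delta>) * m = e1" using v by (simp add: m_def powr_minus field_simps)
  obtain \<epsilon>0 where \<epsilon>0: "\<epsilon>0 > 0" and mom0: "\<And>\<epsilon>. 0 < \<epsilon> \<Longrightarrow> \<epsilon> < \<epsilon>0 \<Longrightarrow>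
     eventually (\<lambda>x. Imom \<epsilon> x / ennreal (F x) < ennreal m) at_top"
    using mom_eps[OF m] by blast
  define \<epsilon> where "\<epsilon> = \<epsilon>0 / 2"
  have eps: "0 < \<epsilon>" "\<epsilon> < \<epsilon>0" using \<epsilon>0 by (auto simp: \<epsilon>_def)
  have "((\<lambda>K. K powr (- \<alpha>)) \<longlongrightarrow> 0) at_top"
    using apos by (intro tendsto_neg_powr filterlim_ident) auto
  then have "eventually (\<lambda>K. K powr (- \<alpha>) < e1) at_top"
    using e1 by (intro order_tendstoD(2)) auto
  moreover have "eventually (\<lambda>K. K > \<epsilon>) at_top" by (rule eventually_gt_at_top)
  ultimately have "eventually (\<lambda>K. K powr (- \<alpha>) < e1 \<and> K > \<epsilon>) at_top"
    by (rule eventually_conj)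
  then obtain K0 where "\<forall>K\<ge>K0. K powr (- \<alpha>) < e1 \<and> K > \<epsilon>"
    by (auto simp: eventually_at_top_linorder)
  then have K: "K0 powr (- \<alpha>) < e1" "K0 > \<epsilon>" by auto
  define K where "K = K0"
  note K = K[folded K_def]
  have Kpos: "K > 0" using K eps by linarith
  define C where "C = v / \<epsilon>"
  have C: "C \<ge> 0" "C * \<epsilon> = v" using eps v by (auto simp: C_def)
  define I where "I = (\<integral>y. Tf \<epsilon> K C 1 v (y 0) (y h) \<partial>N)"
  have I: "I \<le> c0" unfolding I_def c0_def
  proof (rule N_int_le[where a="\<epsilon>/2"])
    fix y assume y: "y \<in> space N" "Tf \<epsilon> K C 1 v (y 0) (y h) > 0"
    have "ereal (\<epsilon>/2) < y 0 \<and> 0 < y h \<and> ereal 1 < y 0 * y h"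
      using Tf_pos[OF _ _ _ _ _ y(2)] eps v C Kpos by auto
    moreover have "0 < y 0" using calculation eps
      by (metis divide_pos_pos ereal_less(2) order_less_trans zero_less_numeral)
    ultimately show "y \<in> Sw 1" using y by (auto simp: Sw_def one_ereal_def)
  qed (use eps v Sw_fin[of 1] Tf_bounds Tf_zero in auto)
  have lim1: "((\<lambda>x. (\<integral>\<omega>. Tf \<epsilon> K C 1 v (ereal (X 0 \<omega> / x)) (ereal (X (int h) \<omega> / B x)) \<partial>M) / F x)
     \<longlongrightarrow> I) at_top"
    unfolding I_def using eps C Kpos by (intro vague_Tf) auto
  define U where "U x = ((\<integral>\<omega>. Tf \<epsilon> K C 1 v (ereal (X 0 \<omega> / x)) (ereal (X (int h) \<omega> / B x)) \<partial>M) / F x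
      + F (K * x) / F x + e1) * (F x / F (t * x))" for x
  have limU: "(U \<longlongrightarrow> (I + K powr (- \<alpha>) + e1) * t powr \<alpha>) at_top"
    unfolding U_def using t Kpos by (intro tendsto_mult tendsto_add lim1 F_inv_ratio F_ratio tendsto_const)
  have "(I + K powr (- \<alpha>) + e1) * t powr \<alpha> \<le> (c0 + 2 * e1) * t powr \<alpha>"
    using I K tpa by (intro mult_right_mono) auto
  also have "\<dots> \<le> c0 * t powr \<alpha> + e / 2" using e1t by (simp add: algebra_simps)
  also have "\<dots> < t powr \<alpha> * c0 + e" using e by (simp add: mult.commute)
  finally have limlt: "(I + K powr (- \<alpha>) + e1) * t powr \<alpha> < t powr \<alpha> * c0 + e" .
  have evU: "eventually (\<lambda>x. U x < t powr \<alpha> * c0 + e) at_top"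
    by (rule order_tendstoD(2)[OF limU limlt])
  have evr: "eventually (\<lambda>x. t * (B (t * x) / B x) * u > v) at_top"
    using v by (intro order_tendstoD(1)[OF r_lim[OF t]]) auto
  have "eventually (\<lambda>x. R u (t * x) \<le> t powr \<alpha> * c0 + e) at_top"
    using evU evr F_pos ev_mult[OF t F_pos] eventually_gt_at_top[of 0] mom0[OF eps]
  proof eventually_elim
    case (elim x)
    have Bx0: "B x > 0" using B_pos elim by auto
    define E1 where "E1 = {\<omega> \<in> space M. \<epsilon> * x \<le> X 0 \<omega> \<and> X 0 \<omega> \<le> K * x \<and> x * B x * v < X 0 \<omega> * X (int h) \<omega>}"
    define E2 where "E2 = {\<omega> \<in> space M. X 0 \<omega> > K * x}"
    define E3 where "E3 = {\<omega> \<in> space M. X 0 \<omega> \<le> \<epsilon> * x \<and> v \<le> \<bar>X 0 \<omega> / x * (X (int h) \<omega> / B x)\<bar>}"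
    have [measurable]: "E1 \<in> sets M" "E2 \<in> sets M" "E3 \<in> sets M"
      unfolding E1_def E2_def E3_def by measurable
    have sub: "Ev x v \<subseteq> E1 \<union> E2 \<union> E3"
    proof
      fix \<omega> assume \<omega>: "\<omega> \<in> Ev x v"
      then have sp: "\<omega> \<in> space M" and gt: "x * B x * v < X 0 \<omega> * X (int h) \<omega>" by (auto simp: Ev_def)
      show "\<omega> \<in> E1 \<union> E2 \<union> E3"
      proof (cases "X 0 \<omega> \<le> \<epsilon> * x")
        case True
        have "v < X 0 \<omega> * X (int h) \<omega> / (x * B x)" using gt elim Bx0
          by (simp add: pos_less_divide_eq mult.commute)
        also have "\<dots> = X 0 \<omega> / x * (X (int h) \<omega> / B x)" by simp
        finally have "v \<le> \<bar>X 0 \<omega> / x * (X (int h) \<omega> / B x)\<bar>" by linarith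
        then show ?thesis using True sp by (simp add: E3_def)
      next
        case False
        then show ?thesis using sp gt by (cases "X 0 \<omega> \<le> K * x") (auto simp: E1_def E2_def)
      qed
    qed
    have "measure M (Ev (t * x) u) \<le> measure M (Ev x v)"
      using Ev_sub2[of x t v u] elim t by (intro P.finite_measure_mono) auto
    also have "\<dots> \<le> measure M (E1 \<union> E2 \<union> E3)"
      using sub by (intro P.finite_measure_mono) auto
    also have "\<dots> \<le> measure M E1 + measure M E2 + measure M E3"
    proof -
      have "measure M (E1 \<union> E2 \<union> E3) \<le> measure M (E1 \<union> E2) + measure M E3"
        by (rule measure_Un_le) auto
      moreover have "measure M (E1 \<union> E2) \<le> measure M E1 + measure M E2"
        by (rule measure_Un_le) auto
      ultimately show ?thesis by linarith
    qed
    also have "measure M E1 \<le> (\<integral>\<omega>. Tf \<epsilon> K C 1 v (ereal (X 0 \<omega> / x)) (ereal (X (int h) \<omega> / B x)) \<partial>M)"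
    proof (rule M_int_ge)
      fix \<omega> assume \<omega>: "\<omega> \<in> E1"
      have x0: "\<epsilon> * x \<le> X 0 \<omega>" "X 0 \<omega> \<le> K * x" and gt: "x * B x * v < X 0 \<omega> * X (int h) \<omega>"
        using \<omega> by (auto simp: E1_def)
      have "0 < \<epsilon> * x" using eps elim by simp
      then have X0pos: "X 0 \<omega> > 0" using x0 by linarith
      have "0 < x * B x * v" using elim Bx0 v by simp
      then have "0 < X 0 \<omega> * X (int h) \<omega>" using gt by linarith
      then have Xh: "X (int h) \<omega> > 0" using X0pos by (simp add: zero_less_mult_iff)
      have q: "v < X 0 \<omega> / x * (X (int h) \<omega> / B x)" using gt elim Bx0
        by (simp add: pos_less_divide_eq mult.commute)
      show "Tf \<epsilon> K C 1 v (ereal (X 0 \<omega> / x)) (ereal (X (int h) \<omega> / B x)) = 1"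
      proof (rule Tf_one)
        show "ereal \<epsilon> \<le> ereal (X 0 \<omega> / x)" using x0 elim by (simp add: pos_le_divide_eq)
        show "ereal (X 0 \<omega> / x) \<le> ereal K" using x0 elim by (simp add: pos_divide_le_eq)
        show "0 \<le> ereal (X (int h) \<omega> / B x)" using Xh Bx0 by simp
        show "ereal v < ereal (X 0 \<omega> / x) * ereal (X (int h) \<omega> / B x)" using q by simp
      qed (use eps v C in auto)
    qed (use eps v Tf_bounds in auto)
    also have "measure M E2 = F (K * x)" by (simp add: E2_def tailprob_def)
    also have "measure M E3 \<le> v powr (- \<delta>) * m * F x"
      unfolding E3_def using elim v by (intro markov) auto
    finally have le: "measure M (Ev (t * x) u) \<le>
       (\<integral>\<omega>. Tf \<epsilon> K C 1 v (ereal (X 0 \<omega> / x)) (ereal (X (int h) \<omega> / B x)) \<partial>M) + F (K * x) + e1 * F x"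
      using vm by simp
    have "R u (t * x) \<le> ((\<integral>\<omega>. Tf \<epsilon> K C 1 v (ereal (X 0 \<omega> / x)) (ereal (X (int h) \<omega> / B x)) \<partial>M)
        + F (K * x) + e1 * F x) / F (t * x)"
      unfolding R_def using le elim by (intro divide_right_mono) auto
    also have "\<dots> = U x" using elim by (simp add: U_def field_simps)
    finally show ?case using elim by simp
  qed
  then show ?thesis by (rule ev_scale[OF t])
qed

end



lemma lin1: "L - (L - a)/2 < T \<Longrightarrow> T - (L - a)/2 \<le> R \<Longrightarrow> a < (R::real)" by (simp add: field_simps)
lemma lin2: "T < L + (a - L)/2 \<Longrightarrow> R \<le> T + (a - L)/2 \<Longrightarrow> R < (a::real)" by (simp add: field_simps)

context cevs begin

lemma main_pos:
  assumes pp: "p > 0" and u: "u > 0"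
  shows "((\<lambda>x. R u x) \<longlongrightarrow> u powr (- \<alpha> / p) * c0) at_top"
proof -
  define t0 where "t0 = u powr (-1/p)"
  have t0: "t0 > 0" using u by (simp add: t0_def)
  have t0p: "t0 powr p * u = 1"
  proof -
    have "t0 powr p = u powr (-1/p * p)" unfolding t0_def by (rule powr_powr)
    also have "-1/p * p = -1" using pp by simp
    finally show ?thesis using u by (simp add: powr_minus)
  qed
  have t0a: "t0 powr \<alpha> = u powr (- \<alpha> / p)"
    using u pp by (simp add: t0_def powr_powr)
  have cont: "((\<lambda>t. t powr \<alpha> * c0) \<longlongrightarrow> t0 powr \<alpha> * c0) (at t0)"
    using t0 by (intro tendsto_mult tendsto_powr tendsto_ident_at tendsto_const) auto
  show ?thesis
  proof (rule order_tendstoI)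
    fix a assume a: "a < u powr (- \<alpha> / p) * c0"
    define e where "e = (u powr (- \<alpha> / p) * c0 - a) / 2"
    have e: "e > 0" using a by (simp add: e_def)
    have "eventually (\<lambda>t. t powr \<alpha> * c0 > t0 powr \<alpha> * c0 - e) (at_left t0)"
      using e by (intro order_tendstoD(1)[OF tendsto_mono[OF at_le[OF subset_UNIV] cont]]) auto
    moreover have "eventually (\<lambda>t. 0 < t \<and> t < t0) (at_left t0)"
      unfolding eventually_at_left_field using t0 by (intro exI[of _ 0]) auto
    ultimately have evt: "eventually (\<lambda>t. t powr \<alpha> * c0 > t0 powr \<alpha> * c0 - e \<and> 0 < t \<and> t < t0) (at_left t0)"
      by (rule eventually_conj)
    then obtain t where t: "t powr \<alpha> * c0 > t0 powr \<alpha> * c0 - e" "0 < t" "t < t0"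
    proof -
      have "at_left t0 \<noteq> bot" using trivial_limit_at_left_real[of t0] by (simp add: trivial_limit_def)
      with eventually_happens[OF evt] show thesis using that by blast
    qed
    have "t powr p < t0 powr p" using t pp by (intro powr_less_mono2) auto
    then have "t powr p * u < 1" using t0p u by (metis mult_strict_right_mono)
    then have "eventually (\<lambda>x. R u x \<ge> t powr \<alpha> * c0 - e) at_top"
      using LB[OF t(2) u _ e] by blast
    then show "eventually (\<lambda>x. R u x > a) at_top"
    proof eventually_elim
      case (elim x)
      have "t powr \<alpha> * c0 > u powr (- \<alpha> / p) * c0 - e" using t(1) t0a by simp
      then show ?case using elim unfolding e_def by (rule lin1)
    qed
  next
    fix a assume a: "a > u powr (- \<alpha> / p) * c0"
    define e where "e = (a - u powr (- \<alpha> / p) * c0) / 2"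
    have e: "e > 0" using a by (simp add: e_def)
    have "eventually (\<lambda>t. t powr \<alpha> * c0 < t0 powr \<alpha> * c0 + e) (at_right t0)"
      using e by (intro order_tendstoD(2)[OF tendsto_mono[OF at_le[OF subset_UNIV] cont]]) auto
    moreover have "eventually (\<lambda>t. t0 < t) (at_right t0)"
      unfolding eventually_at_right_field using t0 by (intro exI[of _ "t0 + 1"]) auto
    ultimately have evt: "eventually (\<lambda>t. t powr \<alpha> * c0 < t0 powr \<alpha> * c0 + e \<and> t0 < t) (at_right t0)"
      by (rule eventually_conj)
    then obtain t where t: "t powr \<alpha> * c0 < t0 powr \<alpha> * c0 + e" "t0 < t"
    proof -
      have "at_right t0 \<noteq> bot" using trivial_limit_at_right_real[of t0] by (simp add: trivial_limit_def)
      with eventually_happens[OF evt] show thesis using that by blast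
    qed
    have tpos: "t > 0" using t t0 by linarith
    have "t0 powr p < t powr p" using t t0 pp by (intro powr_less_mono2) auto
    then have "t powr p * u > 1" using t0p u by (metis mult_strict_right_mono)
    then have "eventually (\<lambda>x. R u x \<le> t powr \<alpha> * c0 + e) at_top"
      using UB[OF tpos u _ e] by blast
    then show "eventually (\<lambda>x. R u x < a) at_top"
    proof eventually_elim
      case (elim x)
      have "t powr \<alpha> * c0 < u powr (- \<alpha> / p) * c0 + e" using t(1) t0a by simp
      then show ?case using elim unfolding e_def by (rule lin2)
    qed
  qed
qed

end



context cevs begin

definition G :: "real \<Rightarrow> real" where
  "G x = (x * B x) powr \<delta> * F x"

definition W :: "real \<Rightarrow> real \<Rightarrow> 'a \<Rightarrow> ennreal" where
  "W \<epsilon> x \<omega> = ennreal (\<bar>X 0 \<omega> * X (int h) \<omega>\<bar> powr \<delta> * indicator {\<omega>. X 0 \<omega> \<le> \<epsilon> * x} \<omega>)"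

lemma W_meas[measurable]: "W \<epsilon> x \<in> borel_measurable M"
  unfolding W_def by measurable

lemma W_bound:
  assumes x: "x > 0" and Fx: "F x > 0" and mI: "Imom \<epsilon> x / ennreal (F x) < ennreal 1"
  shows "(\<integral>\<^sup>+\<omega>. W \<epsilon> x \<omega> \<partial>M) \<le> ennreal (G x)"
proof -
  have Bx: "B x > 0" using B_pos x by auto
  define c where "c = (x * B x) powr \<delta>"
  have c: "c > 0" using x Bx by (simp add: c_def)
  have pt: "W \<epsilon> x \<omega> = ennreal c * ennreal (\<bar>X 0 \<omega> / x * indicator {\<omega>. X 0 \<omega> \<le> \<epsilon> * x} \<omega>
                              * (X (int h) \<omega> / b h x)\<bar> powr \<delta>)" for \<omega>
  proof (cases "X 0 \<omega> \<le> \<epsilon> * x")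
    case True
    have "\<bar>X 0 \<omega> / x * 1 * (X (int h) \<omega> / b h x)\<bar> = \<bar>X 0 \<omega> * X (int h) \<omega>\<bar> / (x * B x)"
      using x Bx by (simp add: abs_mult abs_divide)
    then have "\<bar>X 0 \<omega> / x * 1 * (X (int h) \<omega> / b h x)\<bar> powr \<delta> = \<bar>X 0 \<omega> * X (int h) \<omega>\<bar> powr \<delta> / c"
      using x Bx by (simp add: powr_divide c_def abs_of_pos)
    then have "c * \<bar>X 0 \<omega> / x * 1 * (X (int h) \<omega> / b h x)\<bar> powr \<delta> = \<bar>X 0 \<omega> * X (int h) \<omega>\<bar> powr \<delta>"
      using c by simp
    then show ?thesis using True c by (simp add: W_def ennreal_mult[symmetric])
  next
    case False
    then show ?thesis by (simp add: W_def)
  qed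
  have "(\<integral>\<^sup>+\<omega>. W \<epsilon> x \<omega> \<partial>M) = ennreal c * Imom \<epsilon> x"
    unfolding pt Imom_def by (rule nn_integral_cmult) measurable
  also have "Imom \<epsilon> x \<le> ennreal (F x)"
    using mI Fx by (subst (asm) divide_less_ennreal) auto
  finally show ?thesis using c Fx
    by (simp add: G_def c_def ennreal_mult[symmetric] mult_left_mono)
qed

lemma G_ratio:
  "((\<lambda>x. G (2 * x) / G x) \<longlongrightarrow> 2 powr (\<delta> * p - \<alpha>)) at_top"
proof -
  have lim0: "((\<lambda>x. (2 * (B (2 * x) / B x)) powr \<delta> * (F (2 * x) / F x))
      \<longlongrightarrow> (2 * 2 powr \<kappa> h) powr \<delta> * 2 powr (- \<alpha>)) at_top"
    by (intro tendsto_mult tendsto_powr tendsto_const B_ratio F_ratio) auto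
  have val: "(2 * 2 powr \<kappa> h) powr \<delta> * 2 powr (- \<alpha>) = 2 powr (\<delta> * p - \<alpha>)"
  proof -
    have "(2::real) * 2 powr \<kappa> h = 2 powr p" by (simp add: p_def powr_add)
    then show ?thesis by (simp add: powr_powr powr_add[symmetric] mult.commute)
  qed
  have ev: "eventually (\<lambda>x. (2 * (B (2 * x) / B x)) powr \<delta> * (F (2 * x) / F x) = G (2 * x) / G x) at_top"
    using F_pos eventually_gt_at_top[of 0]
  proof eventually_elim
    case (elim x)
    have Bx: "B x > 0" "B (2 * x) > 0" using B_pos elim by auto
    have "(2 * x * B (2 * x)) powr \<delta> = (2 * (B (2 * x) / B x)) powr \<delta> * (x * B x) powr \<delta>"
      using Bx elim by (simp add: powr_mult[symmetric] mult_ac)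
    moreover have "(x * B x) powr \<delta> > 0" using Bx elim by simp
    ultimately show ?case using elim by (simp add: G_def field_simps)
  qed
  show ?thesis using Lim_transform_eventually[OF lim0 ev] val by simp
qed

lemma zero_prod:
  assumes pp: "p \<le> 0"
  shows "AE \<omega> in M. X 0 \<omega> * X (int h) \<omega> = 0"
proof -
  obtain \<epsilon>0 where \<epsilon>0: "\<epsilon>0 > 0" and mom0: "\<And>\<epsilon>. 0 < \<epsilon> \<Longrightarrow> \<epsilon> < \<epsilon>0 \<Longrightarrow>
     eventually (\<lambda>x. Imom \<epsilon> x / ennreal (F x) < ennreal 1) at_top"
    using mom_eps[of 1] by auto
  define \<epsilon> where "\<epsilon> = \<epsilon>0 / 2"
  have eps: "0 < \<epsilon>" "\<epsilon> < \<epsilon>0" using \<epsilon>0 by (auto simp: \<epsilon>_def)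
  define q where "q = (2 powr (\<delta> * p - \<alpha>) + 1) / 2"
  have neg: "\<delta> * p - \<alpha> < 0" using pp dpos apos
    by (smt (verit) mult_nonneg_nonpos)
  have lt1: "2 powr (\<delta> * p - \<alpha>) < (1::real)" by (rule powr_less_one) (use neg in auto)
  have q12: "2 powr (\<delta> * p - \<alpha>) < q" "q < 1" using lt1 by (auto simp: q_def field_simps)
  have "(0::real) \<le> 2 powr (\<delta> * p - \<alpha>)" by simp
  then have "0 < 2 powr (\<delta> * p - \<alpha>) + (1::real)" by (rule add_nonneg_pos) simp
  then have "0 < q" unfolding q_def by simp
  note q = q12 this
  have evq: "eventually (\<lambda>x. G (2 * x) / G x < q) at_top"
    by (rule order_tendstoD(2)[OF G_ratio q(1)])
  have "eventually (\<lambda>x. G (2 * x) / G x < q \<and> x > 0 \<and> F x > 0 \<and>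
      Imom \<epsilon> x / ennreal (F x) < ennreal 1) at_top"
    using evq eventually_gt_at_top[of 0] F_pos mom0[OF eps] by eventually_elim auto
  then obtain x0 where x0: "\<And>x. x \<ge> x0 \<Longrightarrow> G (2 * x) / G x < q \<and> x > 0 \<and> F x > 0 \<and>
      Imom \<epsilon> x / ennreal (F x) < ennreal 1"
    by (auto simp: eventually_at_top_linorder)
  have x0pos: "x0 > 0" using x0[of x0] by simp
  have Gpos: "G x > 0" if "x \<ge> x0" for x
  proof -
    have "x > 0" "F x > 0" using x0[OF that] by auto
    moreover have "B x > 0" using B_pos calculation by auto
    ultimately show ?thesis by (simp add: G_def)
  qed
  have Gstep: "G (2 * x) \<le> q * G x" if "x \<ge> x0" for x
    using x0[OF that] Gpos[OF that] by (simp add: divide_less_eq less_imp_le)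
  have xn: "2 ^ n * x0 \<ge> x0" for n :: nat
    using x0pos by (simp add: mult_le_cancel_right1)
  have Gn: "G (2 ^ n * x0) \<le> q ^ n * G x0" for n :: nat
  proof (induction n)
    case (Suc n)
    have "G (2 ^ Suc n * x0) = G (2 * (2 ^ n * x0))" by (simp add: mult.assoc)
    also have "\<dots> \<le> q * G (2 ^ n * x0)" by (rule Gstep[OF xn])
    also have "\<dots> \<le> q * (q ^ n * G x0)" using Suc q by (intro mult_left_mono) auto
    finally show ?case by (simp add: mult.assoc)
  qed simp
  have Jz: "AE \<omega> in M. X 0 \<omega> \<le> \<epsilon> * (2 ^ N * x0) \<longrightarrow> X 0 \<omega> * X (int h) \<omega> = 0" for N :: nat
  proof -
    have lim: "(\<lambda>n. ennreal (q ^ n * G x0)) \<longlonglongrightarrow> ennreal (0 * G x0)"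
      using q by (intro tendsto_ennrealI tendsto_mult LIMSEQ_realpow_zero tendsto_const) auto
    have "\<forall>n\<ge>N. (\<integral>\<^sup>+\<omega>. W \<epsilon> (2 ^ N * x0) \<omega> \<partial>M) \<le> ennreal (q ^ n * G x0)"
    proof (intro allI impI)
      fix n :: nat assume n: "n \<ge> N"
      have "(2::real) ^ N \<le> 2 ^ n" using n by (intro power_increasing) auto
      then have le: "\<epsilon> * (2 ^ N * x0) \<le> \<epsilon> * (2 ^ n * x0)" using eps x0pos by (intro mult_left_mono) auto
      have "(\<integral>\<^sup>+\<omega>. W \<epsilon> (2 ^ N * x0) \<omega> \<partial>M) \<le> (\<integral>\<^sup>+\<omega>. W \<epsilon> (2 ^ n * x0) \<omega> \<partial>M)"
        using le by (intro nn_integral_mono) (auto simp: W_def indicator_def intro!: ennreal_leI)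
      also have "\<dots> \<le> ennreal (G (2 ^ n * x0))"
        using x0[OF xn[of n]] by (intro W_bound) auto
      also have "\<dots> \<le> ennreal (q ^ n * G x0)" using Gn by (intro ennreal_leI) auto
      finally show "(\<integral>\<^sup>+\<omega>. W \<epsilon> (2 ^ N * x0) \<omega> \<partial>M) \<le> ennreal (q ^ n * G x0)" .
    qed
    then have "(\<integral>\<^sup>+\<omega>. W \<epsilon> (2 ^ N * x0) \<omega> \<partial>M) \<le> ennreal (0 * G x0)"
      by (intro LIMSEQ_le_const[OF lim]) auto
    then have "(\<integral>\<^sup>+\<omega>. W \<epsilon> (2 ^ N * x0) \<omega> \<partial>M) = 0" by simp
    then have "AE \<omega> in M. W \<epsilon> (2 ^ N * x0) \<omega> = 0"
      by (subst (asm) nn_integral_0_iff_AE) auto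
    then show ?thesis
    proof (rule eventually_mono)
      fix \<omega> assume "W \<epsilon> (2 ^ N * x0) \<omega> = 0"
      then show "X 0 \<omega> \<le> \<epsilon> * (2 ^ N * x0) \<longrightarrow> X 0 \<omega> * X (int h) \<omega> = 0"
        by (auto simp: W_def ennreal_eq_0_iff)
    qed
  qed
  then have "AE \<omega> in M. \<forall>N::nat. X 0 \<omega> \<le> \<epsilon> * (2 ^ N * x0) \<longrightarrow> X 0 \<omega> * X (int h) \<omega> = 0"
    by (subst AE_all_countable) auto
  then show ?thesis
  proof (rule eventually_mono)
    fix \<omega> assume all: "\<forall>N::nat. X 0 \<omega> \<le> \<epsilon> * (2 ^ N * x0) \<longrightarrow> X 0 \<omega> * X (int h) \<omega> = 0"
    obtain N :: nat where "X 0 \<omega> / (\<epsilon> * x0) < 2 ^ N"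
      using real_arch_pow[of 2 "X 0 \<omega> / (\<epsilon> * x0)"] by auto
    then have "X 0 \<omega> \<le> \<epsilon> * (2 ^ N * x0)" using eps x0pos
      by (simp add: divide_less_eq mult.commute mult.left_commute less_imp_le)
    then show "X 0 \<omega> * X (int h) \<omega> = 0" using all by blast
  qed
qed

lemma R_zero:
  assumes pp: "p \<le> 0" and u: "u > 0"
  shows "eventually (\<lambda>x. R u x = 0) at_top"
  using eventually_gt_at_top[of 0]
proof eventually_elim
  case (elim x)
  have Bx: "B x > 0" using B_pos elim by auto
  have "AE \<omega> in M. \<omega> \<notin> Ev x u"
    using zero_prod[OF pp]
  proof (rule eventually_mono)
    fix \<omega> assume "X 0 \<omega> * X (int h) \<omega> = 0"
    moreover have "x * B x * u > 0" using elim Bx u by simp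
    ultimately show "\<omega> \<notin> Ev x u" by (auto simp: Ev_def)
  qed
  then have "emeasure M (Ev x u) = 0"
    by (subst (asm) AE_iff_measurable[OF Ev_sets]) (auto simp: Ev_def)
  then show ?case by (simp add: R_def P.emeasure_eq_measure)
qed

lemma c0_zero:
  assumes pp: "p \<le> 0"
  shows "c0 = 0"
proof (rule ccontr)
  assume "c0 \<noteq> 0"
  then have c: "c0 > 0" using c0_nonneg by simp
  have "eventually (\<lambda>x. R (1/2) x \<ge> 1 powr \<alpha> * c0 - c0/2) at_top"
    using c by (intro LB) auto
  moreover have "eventually (\<lambda>x. R (1/2) x = 0) at_top" using pp by (intro R_zero) auto
  ultimately have "eventually (\<lambda>x. 1 powr \<alpha> * c0 - c0/2 \<le> R (1/2) x \<and> R (1/2) x = 0) at_top"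
    by (rule eventually_conj)
  then obtain N where "\<forall>x\<ge>N. 1 powr \<alpha> * c0 - c0/2 \<le> R (1/2) x \<and> R (1/2) x = 0"
    by (auto simp: eventually_at_top_linorder)
  then have "c0 - c0/2 \<le> 0" by auto
  then show False using c by simp
qed

end



theorem proposition2:
  fixes M :: "'a measure" and X :: "int \<Rightarrow> 'a \<Rightarrow> real"
    and b :: "nat \<Rightarrow> real \<Rightarrow> real" and \<nu> :: "nat \<Rightarrow> (nat \<Rightarrow> ereal) measure"
    and \<alpha> :: real and \<kappa> :: "nat \<Rightarrow> real" and h :: nat
  assumes "prob_space M"
    and "\<forall>t. X t \<in> borel_measurable M"
    and "CEV M X b \<nu>"
    and "\<alpha> > 0"
    and "regularly_varying (tailprob M X) (- \<alpha>)"
    and "\<forall>j\<ge>1. regularly_varying (b j) (\<kappa> j)"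
    and "h \<ge> 1"
    and "emeasure (\<nu> h) (prod_exceed_set h (\<nu> h)) < \<infinity>"
    and "\<exists>\<delta>>0. ((\<lambda>\<epsilon>. Limsup at_top (\<lambda>x.
            (\<integral>\<^sup>+\<omega>. ennreal (\<bar>X 0 \<omega> / x * indicator {\<omega>. X 0 \<omega> \<le> \<epsilon> * x} \<omega>
                              * (X (int h) \<omega> / b h x)\<bar> powr \<delta>) \<partial>M)
            / ennreal (tailprob M X x))) \<longlongrightarrow> 0) (at_right 0)"
  shows "\<forall>u>0. ((\<lambda>x. measure M {\<omega> \<in> space M. X 0 \<omega> * X (int h) \<omega> > x * b h x * u}
                   / tailprob M X x)
           \<longlongrightarrow> u powr (- \<alpha> / (1 + \<kappa> h)) * measure (\<nu> h) (prod_exceed_set h (\<nu> h))) at_top"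
proof -
  obtain \<delta> where d: "\<delta> > 0" and md: "((\<lambda>\<epsilon>. Limsup at_top (\<lambda>x.
            (\<integral>\<^sup>+\<omega>. ennreal (\<bar>X 0 \<omega> / x * indicator {\<omega>. X 0 \<omega> \<le> \<epsilon> * x} \<omega>
                              * (X (int h) \<omega> / b h x)\<bar> powr \<delta>) \<partial>M)
            / ennreal (tailprob M X x))) \<longlongrightarrow> 0) (at_right 0)"
    using assms(9) by blast
  interpret C: cevs M X b \<nu> \<alpha> \<kappa> h \<delta>
    by (rule cevs.intro[OF assms(1) assms(2) assms(3) assms(4) assms(5) assms(6) assms(7) assms(8) d md])
  show ?thesis
  proof (intro allI impI)
    fix u :: real assume u: "u > 0"
    have eq: "(\<lambda>x. measure M {\<omega> \<in> space M. X 0 \<omega> * X (int h) \<omega> > x * b h x * u} / tailprob M X x)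
        = (\<lambda>x. C.R u x)"
      by (simp add: C.R_def C.Ev_def)
    have rhs: "u powr (- \<alpha> / (1 + \<kappa> h)) * measure (\<nu> h) (prod_exceed_set h (\<nu> h))
        = u powr (- \<alpha> / C.p) * C.c0"
      by (simp add: C.p_def C.c0_def C.S1)
    show "((\<lambda>x. measure M {\<omega> \<in> space M. X 0 \<omega> * X (int h) \<omega> > x * b h x * u} / tailprob M X x)
       \<longlongrightarrow> u powr (- \<alpha> / (1 + \<kappa> h)) * measure (\<nu> h) (prod_exceed_set h (\<nu> h))) at_top"
      unfolding eq rhs
    proof (cases "C.p > 0")
      case True
      then show "((\<lambda>x. C.R u x) \<longlongrightarrow> u powr (- \<alpha> / C.p) * C.c0) at_top"
        using C.main_pos u by blast
    next
      case False
      then have pp: "C.p \<le> 0" by simp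
      have "((\<lambda>x. C.R u x) \<longlongrightarrow> 0) at_top"
        using C.R_zero[OF pp u] by (rule tendsto_eventually)
      then show "((\<lambda>x. C.R u x) \<longlongrightarrow> u powr (- \<alpha> / C.p) * C.c0) at_top"
        using C.c0_zero[OF pp] by simp
    qed
  qed
qed


end
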